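(* Let $\lambda$ be a partition of $n$, let $\mathrm{Tab}(\lambda)$ be the set of standard tableaux of shape $\lambda$, and let $\aleph_\lambda$ be the bottom tableau of shape $\lambda$. Suppose $f(x_1,\dots,x_n)=\sum_{t\in \mathrm{Tab}(\lambda)} c_t\,\Delta^x_t$ with coefficients $c_t$ in a field of characteristic $0$ not depending on $x_1,\dots,x_n$. Then $\Delta^x_{\aleph_\lambda}(\aleph_\lambda)\neq 0$ and $$c_{\aleph_\lambda}=\frac{f(\aleph_\lambda)}{\Delta^x_{\aleph_\lambda}(\aleph_\lambda)}.$$
   Context: Diagrams are drawn in French convention: rows are numbered $0,1,2,\dots$ from the bottom, columns $0,1,\dots$ from the left. A standard tableau of shape $\lambda$ is a bijective filling of the boxes of the diagram of $\lambda$ with $1,\dots,n$, increasing from left to right in rows and from bottom to top in columns. For distinct indices, $\Delta^x(i_1,\dots,i_k)=\prod_{1\le p<q\le k}(x_{i_p}-x_{i_q})$. The Specht polynomial of a tableau $t$ is $\Delta^x_t=\prod_{\text{columns } C \text{ of } t}\Delta^x(\text{entries of } C \text{ read from bottom to top})$. The bottom tableau $\aleph_\lambda$ is the standard tableau whose rows, from the bottom row upwards, are filled with consecutive integers (each row from left to right). For a tableau $t$ and a function $f(x_1,\dots,x_n)$, $f(t)$ denotes the specialization $x_i\mapsto r$, where $r$ is the row index of the box of $t$ containing $i$. *)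

theory Defs
  imports Main
begin

text \<open>A partition is a list of positive parts, weakly decreasing; part i is the length
  of row i (rows numbered from the bottom, French convention).\<close>
definition is_partition :: "nat list \<Rightarrow> nat \<Rightarrow> bool" where
  "is_partition lam n \<longleftrightarrow> sorted (rev lam) \<and> (\<forall>p\<in>set lam. 0 < p) \<and> sum_list lam = n"

definition diagram :: "nat list \<Rightarrow> (nat \<times> nat) set" where
  "diagram lam = {(r, c). r < length lam \<and> c < lam ! r}"

type_synonym tableau = "nat \<times> nat \<Rightarrow> nat"

definition standard_tableaux :: "nat list \<Rightarrow> tableau set" where
  "standard_tableaux lam = {t.
     bij_betw t (diagram lam) {1..sum_list lam}
   \<and> (\<forall>b. b \<notin> diagram lam \<longrightarrow> t b = 0)
   \<and> (\<forall>r c. (r, c) \<in> diagram lam \<and> (r, Suc c) \<in> diagram lam \<longrightarrow> t (r, c) < t (r, Suc c))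
   \<and> (\<forall>r c. (r, c) \<in> diagram lam \<and> (Suc r, c) \<in> diagram lam \<longrightarrow> t (r, c) < t (Suc r, c))}"

definition specht :: "nat list \<Rightarrow> tableau \<Rightarrow> (nat \<Rightarrow> 'a::comm_ring_1) \<Rightarrow> 'a" where
  "specht lam t x = (\<Prod>(p, q, c) \<in> {(p, q, c). p < q \<and> (p, c) \<in> diagram lam \<and> (q, c) \<in> diagram lam}.
       x (t (p, c)) - x (t (q, c)))"

definition bottom_tableau :: "nat list \<Rightarrow> tableau" where
  "bottom_tableau lam = (\<lambda>(r, c). if (r, c) \<in> diagram lam then sum_list (take r lam) + c + 1 else 0)"

definition row_of :: "nat list \<Rightarrow> tableau \<Rightarrow> nat \<Rightarrow> nat" where
  "row_of lam t i = fst (THE b. b \<in> diagram lam \<and> t b = i)"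

text \<open>Specialization f(t): x_i \<mapsto> row index of i in t.\<close>
definition specialize :: "nat list \<Rightarrow> tableau \<Rightarrow> nat \<Rightarrow> 'a::semiring_1" where
  "specialize lam t = (\<lambda>i. of_nat (row_of lam t i))"

end

theory Submission
  imports Defs
begin

lemma diagram_Sigma: "diagram lam = Sigma {..<length lam} (\<lambda>r. {..<lam!r})"
  unfolding diagram_def by auto

lemma diagram_finite: "finite (diagram lam)"
  unfolding diagram_Sigma by auto

lemma diagram_card: "card (diagram lam) = sum_list lam"
  unfolding diagram_Sigma by (simp add: sum_list_sum_nth atLeast0LessThan)

lemma N_Suc: "r < length (lam::nat list) \<Longrightarrow> sum_list (take (Suc r) lam) = sum_list (take r lam) + lam!r"
  by (simp add: take_Suc_conv_app_nth)

lemma N_mono: "a \<le> b \<Longrightarrow> sum_list (take a (lam::nat list)) \<le> sum_list (take (b::nat) lam)"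
proof -
  assume ab: "a \<le> b"
  have "\<And>r. sum_list (take r lam) \<le> sum_list (take (Suc r) lam)"
  proof -
    fix r
    show "sum_list (take r lam) \<le> sum_list (take (Suc r) lam)"
      by (cases "r < length lam") (simp_all add: N_Suc)
  qed
  then show ?thesis using lift_Suc_mono_le[of "\<lambda>r. sum_list (take r lam)"] ab by blast
qed

lemma B_val: "(r, c) \<in> diagram lam \<Longrightarrow>
   bottom_tableau lam (r, c) = sum_list (take r lam) + c + 1"
  unfolding bottom_tableau_def by simp

lemma B_bounds: "(r, c) \<in> diagram lam \<Longrightarrow>
   sum_list (take r lam) < bottom_tableau lam (r, c) \<and> bottom_tableau lam (r, c) \<le> sum_list (take (Suc r) lam)"
  using B_val[of r c lam] N_Suc[of r lam] unfolding diagram_def by auto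

lemma B_row_le:
  assumes "b \<in> diagram lam" "b' \<in> diagram lam" "bottom_tableau lam b \<le> bottom_tableau lam b'"
  shows "fst b \<le> fst b'"
proof (rule ccontr)
  obtain r c where b: "b = (r, c)" by force
  obtain r' c' where b': "b' = (r', c')" by force
  assume "\<not> fst b \<le> fst b'"
  then have "Suc r' \<le> r" using b b' by auto
  then have "bottom_tableau lam b' \<le> sum_list (take r lam)"
    using B_bounds[of r' c' lam] N_mono[of "Suc r'" r lam] assms(2) b' by auto
  also have "\<dots> < bottom_tableau lam b" using B_bounds[of r c lam] assms(1) b by auto
  finally show False using assms(3) by simp
qed

lemma B_inj: "inj_on (bottom_tableau lam) (diagram lam)"
proof (rule inj_onI)
  fix b b' assume h: "b \<in> diagram lam" "b' \<in> diagram lam" "bottom_tableau lam b = bottom_tableau lam b'"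
  then have "fst b = fst b'" using B_row_le[of b lam b'] B_row_le[of b' lam b] by auto
  moreover obtain r c where b: "b = (r, c)" by force
  moreover obtain r' c' where b': "b' = (r', c')" by force
  ultimately show "b = b'" using h B_val[of r c lam] B_val[of r' c' lam] by auto
qed

lemma B_bij: "bij_betw (bottom_tableau lam) (diagram lam) {1..sum_list lam}"
proof -
  have sub: "bottom_tableau lam ` diagram lam \<subseteq> {1..sum_list lam}"
  proof
    fix i assume "i \<in> bottom_tableau lam ` diagram lam"
    then obtain r c where rc: "(r, c) \<in> diagram lam" "i = bottom_tableau lam (r, c)" by auto
    have "r < length lam" using rc unfolding diagram_def by auto
    then have "Suc r \<le> length lam" by simp
    then have "sum_list (take (Suc r) lam) \<le> sum_list (take (length lam) lam)" by (rule N_mono)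
    then show "i \<in> {1..sum_list lam}" using B_bounds[OF rc(1)] rc by auto
  qed
  have "card (bottom_tableau lam ` diagram lam) = card {1..sum_list lam}"
    using card_image[OF B_inj] diagram_card by simp
  then have "bottom_tableau lam ` diagram lam = {1..sum_list lam}"
    using card_subset_eq[OF _ sub] by simp
  then show ?thesis using B_inj unfolding bij_betw_def by simp
qed

lemma row_of_B: "b \<in> diagram lam \<Longrightarrow> row_of lam (bottom_tableau lam) (bottom_tableau lam b) = fst b"
  unfolding row_of_def
  by (rule arg_cong[where f=fst], rule the_equality) (auto dest: inj_onD[OF B_inj])

lemma col_down:
  assumes "is_partition lam n" "(Suc r, c) \<in> diagram lam"
  shows "(r, c) \<in> diagram lam"
proof -
  have s: "sorted (rev lam)" using assms(1) unfolding is_partition_def by simp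
  have "Suc r < length lam" "c < lam ! Suc r" using assms(2) unfolding diagram_def by auto
  then show ?thesis using sorted_rev_nth_mono[OF s, of r "Suc r"] unfolding diagram_def by auto
qed

lemma B_standard:
  assumes "is_partition lam n"
  shows "bottom_tableau lam \<in> standard_tableaux lam"
  unfolding standard_tableaux_def
proof (intro CollectI conjI allI impI)
  show "bij_betw (bottom_tableau lam) (diagram lam) {1..sum_list lam}" by (rule B_bij)
next
  fix b assume "b \<notin> diagram lam"
  then show "bottom_tableau lam b = 0" unfolding bottom_tableau_def by (cases b) auto
next
  fix r c assume "(r, c) \<in> diagram lam \<and> (r, Suc c) \<in> diagram lam"
  then show "bottom_tableau lam (r, c) < bottom_tableau lam (r, Suc c)"
    using B_val[of r c lam] B_val[of r "Suc c" lam] by auto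
next
  fix r c assume h: "(r, c) \<in> diagram lam \<and> (Suc r, c) \<in> diagram lam"
  then show "bottom_tableau lam (r, c) < bottom_tableau lam (Suc r, c)"
    using B_bounds[of r c lam] B_bounds[of "Suc r" c lam] by auto
qed

lemma specht_index_finite:
  "finite {(p, q, c). p < q \<and> (p, c) \<in> diagram lam \<and> (q, c) \<in> diagram lam}"
proof (rule finite_subset)
  show "{(p, q, c). p < q \<and> (p, c) \<in> diagram lam \<and> (q, c) \<in> diagram lam}
     \<subseteq> (\<lambda>((p, c), (q, c')). (p, q, c)) ` (diagram lam \<times> diagram lam)"
    by (auto simp: image_iff) force
  show "finite ((\<lambda>((p, c), (q, c')). (p, q, c)) ` (diagram lam \<times> diagram lam))"
    using diagram_finite by auto
qed

lemma specht_nonzero_iff: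
  "(specht lam t x \<noteq> (0::'a::field)) \<longleftrightarrow>
    (\<forall>p q c. p < q \<and> (p, c) \<in> diagram lam \<and> (q, c) \<in> diagram lam \<longrightarrow> x (t (p, c)) \<noteq> x (t (q, c)))"
  unfolding specht_def using specht_index_finite[of lam]
  by (subst prod_zero_iff) auto

lemma standard_finite: "finite (standard_tableaux lam)"
proof (rule finite_subset)
  show "standard_tableaux lam \<subseteq>
     {f. \<forall>x. (x \<in> diagram lam \<longrightarrow> f x \<in> {1..sum_list lam}) \<and> (x \<notin> diagram lam \<longrightarrow> f x = 0)}"
    unfolding standard_tableaux_def bij_betw_def by auto
  show "finite {f. \<forall>x. (x \<in> diagram lam \<longrightarrow> f x \<in> {1..sum_list lam}) \<and> (x \<notin> diagram lam \<longrightarrow> f x = 0)}"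
    by (rule finite_set_of_finite_funs) (auto simp: diagram_finite)
qed

lemma unique_B:
  assumes part: "is_partition lam n" and t: "t \<in> standard_tableaux lam"
    and nz: "specht lam t (specialize lam (bottom_tableau lam)) \<noteq> (0::'a::field_char_0)"
  shows "t = bottom_tableau lam"
proof -
  define B where "B = bottom_tableau lam"
  define D where "D = diagram lam"
  have tbij: "bij_betw t D {1..sum_list lam}" and toff: "\<And>b. b \<notin> D \<Longrightarrow> t b = 0"
    and trow: "\<And>r c. (r, c) \<in> D \<Longrightarrow> (r, Suc c) \<in> D \<Longrightarrow> t (r, c) < t (r, Suc c)"
    and tcol: "\<And>r c. (r, c) \<in> D \<Longrightarrow> (Suc r, c) \<in> D \<Longrightarrow> t (r, c) < t (Suc r, c)"
    using t unfolding standard_tableaux_def D_def by auto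
  have Bbij: "bij_betw B D {1..sum_list lam}" using B_bij unfolding B_def D_def .
  have pre: "\<And>b. b \<in> D \<Longrightarrow> \<exists>b'\<in>D. t b = B b'"
  proof -
    fix b assume "b \<in> D"
    then have "t b \<in> B ` D" using tbij Bbij unfolding bij_betw_def by auto
    then show "\<exists>b'\<in>D. t b = B b'" by auto
  qed
  have dist: "\<And>p q c. p < q \<Longrightarrow> (p, c) \<in> D \<Longrightarrow> (q, c) \<in> D \<Longrightarrow>
      row_of lam B (t (p, c)) \<noteq> row_of lam B (t (q, c))"
    using nz unfolding specht_nonzero_iff specialize_def B_def D_def by auto
  have rowge: "\<And>r c. (r, c) \<in> D \<Longrightarrow> r \<le> row_of lam B (t (r, c))"
  proof -
    fix r c show "(r, c) \<in> D \<Longrightarrow> r \<le> row_of lam B (t (r, c))"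
    proof (induction r)
      case 0 then show ?case by simp
    next
      case (Suc r)
      have rc: "(r, c) \<in> D" using col_down[OF part] Suc.prems unfolding D_def by blast
      obtain b1 where b1: "b1 \<in> D" "t (r, c) = B b1" using pre[OF rc] by blast
      obtain b2 where b2: "b2 \<in> D" "t (Suc r, c) = B b2" using pre[OF Suc.prems] by blast
      have "B b1 \<le> B b2" using tcol[OF rc Suc.prems] b1 b2 by simp
      then have "fst b1 \<le> fst b2" using B_row_le b1 b2 unfolding B_def D_def by blast
      moreover have "row_of lam B (t (r, c)) = fst b1" using b1 row_of_B unfolding B_def D_def by metis
      moreover have "row_of lam B (t (Suc r, c)) = fst b2" using b2 row_of_B unfolding B_def D_def by metis
      moreover have "row_of lam B (t (r, c)) \<noteq> row_of lam B (t (Suc r, c))"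
        using dist[OF _ rc Suc.prems] by simp
      ultimately show ?case using Suc.IH[OF rc] by linarith
    qed
  qed
  have base: "\<And>r c. (r, c) \<in> D \<Longrightarrow> sum_list (take r lam) + 1 \<le> t (r, c)"
  proof -
    fix r c assume rc: "(r, c) \<in> D"
    obtain b where b: "b \<in> D" "t (r, c) = B b" using pre[OF rc] by blast
    obtain r' c' where rc': "b = (r', c')" by force
    have "row_of lam B (t (r, c)) = r'" using b row_of_B rc' unfolding B_def D_def by (metis fst_conv)
    then have "r \<le> r'" using rowge[OF rc] by simp
    then show "sum_list (take r lam) + 1 \<le> t (r, c)"
      using N_mono[of r r' lam] B_val[of r' c' lam] b rc' unfolding B_def D_def by auto
  qed
  have ge: "\<And>r c. (r, c) \<in> D \<Longrightarrow> B (r, c) \<le> t (r, c)"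
  proof -
    fix r c show "(r, c) \<in> D \<Longrightarrow> B (r, c) \<le> t (r, c)"
    proof (induction c)
      case 0 then show ?case using base[OF 0] B_val[of r 0 lam] unfolding B_def D_def by simp
    next
      case (Suc c)
      have rc: "(r, c) \<in> D" using Suc.prems unfolding D_def diagram_def by auto
      show ?case using Suc.IH[OF rc] trow[OF rc Suc.prems] B_val[of r c lam] B_val[of r "Suc c" lam]
          rc Suc.prems unfolding B_def D_def by simp
    qed
  qed
  have sums: "sum t D = sum B D"
    using sum.reindex_bij_betw[OF tbij, of id] sum.reindex_bij_betw[OF Bbij, of id] by simp
  have eqD: "\<forall>b\<in>D. t b = B b"
  proof (rule ccontr)
    assume "\<not> (\<forall>b\<in>D. t b = B b)"
    then obtain b where b: "b \<in> D" "t b \<noteq> B b" by blast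
    have "\<forall>x\<in>D. B x \<le> t x" using ge by auto
    moreover have "B b < t b" using ge[of "fst b" "snd b"] b by auto
    ultimately have "sum B D < sum t D"
      using sum_strict_mono_ex1[of D B t] diagram_finite b(1) unfolding D_def by blast
    then show False using sums by simp
  qed
  show ?thesis
  proof
    fix b show "t b = bottom_tableau lam b"
    proof (cases "b \<in> D")
      case True then show ?thesis using eqD B_def by auto
    next
      case False then show ?thesis using toff[OF False]
        unfolding bottom_tableau_def D_def by (cases b) auto
    qed
  qed
qed

lemma B_specht_nz:
  "specht lam (bottom_tableau lam) (specialize lam (bottom_tableau lam)) \<noteq> (0::'a::field_char_0)"
  unfolding specht_nonzero_iff specialize_def
  by (auto simp: row_of_B)

theorem mainTheorem1:
  fixes lam :: "nat list" and n :: nat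
    and c :: "tableau \<Rightarrow> 'a::field_char_0"
    and f :: "(nat \<Rightarrow> 'a) \<Rightarrow> 'a"
  assumes "is_partition lam n"
    and "\<And>x. f x = (\<Sum>t\<in>standard_tableaux lam. c t * specht lam t x)"
  shows "specht lam (bottom_tableau lam) (specialize lam (bottom_tableau lam)) \<noteq> (0::'a) \<and>
         c (bottom_tableau lam) =
           f (specialize lam (bottom_tableau lam)) /
           specht lam (bottom_tableau lam) (specialize lam (bottom_tableau lam))"
proof -
  define B where "B = bottom_tableau lam"
  define s where "s = (specialize lam B :: nat \<Rightarrow> 'a)"
  have nz: "specht lam B s \<noteq> 0" using B_specht_nz unfolding B_def s_def .
  have "f s = (\<Sum>t\<in>standard_tableaux lam. c t * specht lam t s)" using assms(2) .
  also have "\<dots> = c B * specht lam B s + (\<Sum>t\<in>standard_tableaux lam - {B}. c t * specht lam t s)"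
    using sum.remove[OF standard_finite B_standard[OF assms(1)]] unfolding B_def by blast
  also have "(\<Sum>t\<in>standard_tableaux lam - {B}. c t * specht lam t s) = 0"
  proof (rule sum.neutral, rule ballI)
    fix t assume t: "t \<in> standard_tableaux lam - {B}"
    have "specht lam t s = 0"
    proof (rule ccontr)
      assume "specht lam t s \<noteq> 0"
      then have "t = B" using unique_B[OF assms(1), of t] t unfolding s_def B_def by blast
      then show False using t by simp
    qed
    then show "c t * specht lam t s = 0" by simp
  qed
  finally have "f s = c B * specht lam B s" by simp
  then show ?thesis using nz unfolding B_def[symmetric] s_def[symmetric] by simp
qed

end
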